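(* Let $R$ be a commutative ring and $f\in R[[X]]$. Suppose $f_0=a_1a_2\cdots a_k$ where the $a_i\in R$ are pairwise coprime (i.e. $(a_i,a_j)=R$ for $i\neq j$), and choose $b_1,\dots,b_k\in R$ with $\sum_{i=1}^k b_i\prod_{j\neq i}a_j=1$. Then there exists a unique $g\in XR[[X]]$ such that $f=(a_1+b_1g)(a_2+b_2g)\cdots(a_k+b_kg)$, and the elements $a_i+b_ig$ are pairwise coprime in $R[[X]]$. In particular, if $f_0$ is a product of $k$ pairwise coprime nonzero nonunits of $R$, then $f$ is a product of $k$ pairwise coprime nonzero nonunits of $R[[X]]$.
   Context: $f_0$ denotes the constant term of $f$. *)

theory Defs
  imports "HOL-Computational_Algebra.Formal_Power_Series"
begin

text \<open>Two elements of a commutative ring are coprime in the sense of the paper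
  if the ideal they generate is the whole ring, i.e. (x, y) = R.\<close>
definition comaximal :: "'a::comm_ring_1 \<Rightarrow> 'a \<Rightarrow> bool" where
  "comaximal x y \<longleftrightarrow> (\<exists>u v. u * x + v * y = 1)"

end

theory Submission
  imports Defs
begin

unbundle fps_syntax

definition lowzero :: "nat \<Rightarrow> 'a::comm_ring_1 fps \<Rightarrow> bool" where
  "lowzero n u \<longleftrightarrow> (\<forall>i\<le>n. u $ i = 0)"

lemma lowzero_mult1:
  assumes "lowzero n u" shows "lowzero n (u * v)"
  unfolding lowzero_def fps_mult_nth
proof (intro allI impI sum.neutral ballI)
  fix m i assume "m \<le> n" "i \<in> {0..m}"
  then show "u $ i * v $ (m - i) = 0" using assms by (simp add: lowzero_def)
qed

lemma lowzero_mult2: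
  assumes "lowzero n u" "v $ 0 = 0" shows "lowzero (Suc n) (u * v)"
  unfolding lowzero_def fps_mult_nth
proof (intro allI impI sum.neutral ballI)
  fix m i assume "m \<le> Suc n" "i \<in> {0..m}"
  then show "u $ i * v $ (m - i) = 0" using assms
    by (cases "i \<le> n") (auto simp: lowzero_def)
qed

lemma lowzero_diff: "lowzero n u \<Longrightarrow> lowzero n v \<Longrightarrow> lowzero n (u - v)"
  by (simp add: lowzero_def)

lemma tele:
  fixes x y :: "nat \<Rightarrow> 'b::comm_ring_1"
  shows "(\<Prod>i<k. x i) - (\<Prod>i<k. y i) =
     (\<Sum>i<k. (x i - y i) * (\<Prod>j<i. x j) * (\<Prod>j\<in>{i<..<k}. y j))"
proof (induction k)
  case 0
  then show ?case by simp
next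
  case (Suc k)
  have e: "\<And>i. i < k \<Longrightarrow> {i<..<Suc k} = insert k {i<..<k}" by auto
  have "(\<Sum>i<Suc k. (x i - y i) * (\<Prod>j<i. x j) * (\<Prod>j\<in>{i<..<Suc k}. y j))
     = (\<Sum>i<k. (x i - y i) * (\<Prod>j<i. x j) * (\<Prod>j\<in>{i<..<k}. y j)) * y k
       + (x k - y k) * (\<Prod>j<k. x j)"
  proof -
    have "(\<Sum>i<k. (x i - y i) * (\<Prod>j<i. x j) * (\<Prod>j\<in>{i<..<Suc k}. y j))
       = (\<Sum>i<k. (x i - y i) * (\<Prod>j<i. x j) * (\<Prod>j\<in>{i<..<k}. y j) * y k)"
      by (rule sum.cong) (auto simp: e mult_ac)
    moreover have "{k<..<Suc k} = {}" by auto
    ultimately show ?thesis by (simp add: sum_distrib_right)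
  qed
  also have "\<dots> = ((\<Prod>i<k. x i) - (\<Prod>i<k. y i)) * y k + (x k - y k) * (\<Prod>j<k. x j)"
    using Suc by simp
  also have "\<dots> = (\<Prod>i<Suc k. x i) - (\<Prod>i<Suc k. y i)"
    by (simp add: algebra_simps)
  finally show ?case by simp
qed

lemma fps_prod_nth0: "finite S \<Longrightarrow> (\<Prod>i\<in>S. F i) $ 0 = (\<Prod>i\<in>S. (F i :: 'a::comm_ring_1 fps) $ 0)"
  by (induction S rule: finite_induct) auto

lemma unit0: "(w :: 'a::comm_ring_1 fps) $ 0 = 1 \<Longrightarrow> \<exists>v. w * v = 1"
  using fps_is_left_unit_iff_zeroth_is_left_unit[of w] by (metis mult_1)

definition PP :: "nat \<Rightarrow> (nat \<Rightarrow> 'a::comm_ring_1) \<Rightarrow> (nat \<Rightarrow> 'a) \<Rightarrow> 'a fps \<Rightarrow> 'a fps" where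
  "PP k a b g = (\<Prod>i<k. fps_const (a i) + fps_const (b i) * g)"

definition DD :: "nat \<Rightarrow> (nat \<Rightarrow> 'a::comm_ring_1) \<Rightarrow> (nat \<Rightarrow> 'a) \<Rightarrow> 'a fps \<Rightarrow> 'a fps \<Rightarrow> 'a fps" where
  "DD k a b g h = (\<Sum>i<k. fps_const (b i) * (\<Prod>j<i. fps_const (a j) + fps_const (b j) * g)
      * (\<Prod>j\<in>{i<..<k}. fps_const (a j) + fps_const (b j) * h))"

lemma PP_diff: "PP k a b g - PP k a b h = (g - h) * DD k a b g h"
  unfolding PP_def DD_def tele sum_distrib_left
  by (rule sum.cong) (auto simp: algebra_simps)

lemma DD0:
  assumes "g $ 0 = 0" "h $ 0 = 0"
    and bez: "(\<Sum>i<k. b i * (\<Prod>j\<in>{..<k} - {i}. a j)) = 1"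
  shows "DD k a b g h $ 0 = 1"
proof -
  have s: "\<And>i. i < k \<Longrightarrow> {..<k} - {i} = {..<i} \<union> {i<..<k}" by auto
  have "DD k a b g h $ 0 = (\<Sum>i<k. b i * (\<Prod>j<i. a j) * (\<Prod>j\<in>{i<..<k}. a j))"
    unfolding DD_def fps_sum_nth using assms(1,2) by (simp add: fps_prod_nth0)
  also have "\<dots> = (\<Sum>i<k. b i * (\<Prod>j\<in>{..<k} - {i}. a j))"
  proof (rule sum.cong)
    fix i assume "i \<in> {..<k}"
    then have "(\<Prod>j\<in>{..<k} - {i}. a j) = (\<Prod>j<i. a j) * (\<Prod>j\<in>{i<..<k}. a j)"
      by (simp add: s, subst prod.union_disjoint) auto
    then show "b i * (\<Prod>j<i. a j) * (\<Prod>j\<in>{i<..<k}. a j) = b i * (\<Prod>j\<in>{..<k} - {i}. a j)"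
      by (simp add: mult_ac)
  qed simp
  finally show ?thesis using bez by simp
qed

theorem proposition2p4:
  fixes f :: "'a::comm_ring_1 fps" and k :: nat and a b :: "nat \<Rightarrow> 'a"
  assumes f0: "fps_nth f 0 = (\<Prod>i<k. a i)"
    and cop: "\<And>i j. i < k \<Longrightarrow> j < k \<Longrightarrow> i \<noteq> j \<Longrightarrow> comaximal (a i) (a j)"
    and bez: "(\<Sum>i<k. b i * (\<Prod>j\<in>{..<k} - {i}. a j)) = 1"
  shows "(\<exists>!g. fps_nth g 0 = 0 \<and>
             f = (\<Prod>i<k. fps_const (a i) + fps_const (b i) * g))
       \<and> (\<forall>g. fps_nth g 0 = 0 \<and>
             f = (\<Prod>i<k. fps_const (a i) + fps_const (b i) * g) \<longrightarrow>
             (\<forall>i<k. \<forall>j<k. i \<noteq> j \<longrightarrow>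
                comaximal (fps_const (a i) + fps_const (b i) * g)
                          (fps_const (a j) + fps_const (b j) * g)))
       \<and> ((\<forall>i<k. a i \<noteq> 0 \<and> \<not> a i dvd 1) \<longrightarrow>
             (\<exists>h :: nat \<Rightarrow> 'a fps. f = (\<Prod>i<k. h i)
                \<and> (\<forall>i<k. h i \<noteq> 0 \<and> \<not> h i dvd 1)
                \<and> (\<forall>i<k. \<forall>j<k. i \<noteq> j \<longrightarrow> comaximal (h i) (h j))))"
proof -
  let ?P = "PP k a b"
  define G where "G = rec_nat 0 (\<lambda>n Gn. Gn + (f - ?P Gn))"
  have G0: "G 0 = 0" and GS: "\<And>n. G (Suc n) = G n + (f - ?P (G n))"
    by (simp_all add: G_def)
  have inv: "G n $ 0 = 0 \<and> lowzero n (f - ?P (G n))" for n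
  proof (induction n)
    case 0
    have "?P 0 $ 0 = (\<Prod>i<k. a i)" by (simp add: PP_def fps_prod_nth0)
    then show ?case using f0 by (simp add: G0 lowzero_def)
  next
    case (Suc n)
    define e where "e = f - ?P (G n)"
    have e0: "e $ 0 = 0" using Suc by (simp add: e_def lowzero_def)
    have GS0: "G (Suc n) $ 0 = 0" using Suc e0 by (simp add: GS e_def[symmetric])
    have D1: "DD k a b (G (Suc n)) (G n) $ 0 = 1"
      using DD0[OF GS0 _ bez] Suc by simp
    have "f - ?P (G (Suc n)) = e - (?P (G (Suc n)) - ?P (G n))" by (simp add: e_def)
    also have "\<dots> = e * (1 - DD k a b (G (Suc n)) (G n))"
      unfolding PP_diff by (simp add: GS e_def[symmetric] algebra_simps)
    finally have "f - ?P (G (Suc n)) = e * (1 - DD k a b (G (Suc n)) (G n))" .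
    moreover have "lowzero (Suc n) (e * (1 - DD k a b (G (Suc n)) (G n)))"
      by (rule lowzero_mult2) (use Suc D1 in \<open>simp_all add: e_def\<close>)
    ultimately show ?case using GS0 by simp
  qed
  have stab: "G m $ j = G j $ j" if "j \<le> m" for j m
    using that
  proof (induction m rule: dec_induct)
    case base then show ?case by simp
  next
    case (step m)
    then show ?case using inv[of m] by (simp add: GS lowzero_def)
  qed
  define g where "g = Abs_fps (\<lambda>n. G n $ n)"
  have g0: "g $ 0 = 0" using inv[of 0] by (simp add: g_def)
  have Pg: "?P g = f"
  proof (rule fps_ext)
    fix n
    have lz: "lowzero n (g - G n)" unfolding lowzero_def
    proof (intro allI impI)
      fix i assume "i \<le> n"
      then have "G n $ i = G i $ i" by (rule stab)
      then show "(g - G n) $ i = 0" by (simp add: g_def)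
    qed
    have "f - ?P g = (f - ?P (G n)) - (?P g - ?P (G n))" by simp
    also have "\<dots> = (f - ?P (G n)) - (g - G n) * DD k a b g (G n)" by (simp add: PP_diff)
    finally have eq: "f - ?P g = (f - ?P (G n)) - (g - G n) * DD k a b g (G n)" .
    have "lowzero n (f - ?P g)"
      unfolding eq by (rule lowzero_diff[OF conjunct2[OF inv[of n]] lowzero_mult1[OF lz]])
    then show "?P g $ n = f $ n" by (simp add: lowzero_def)
  qed
  have uniq: "h = g" if hyp: "h $ 0 = 0" "?P h = f" for h
  proof -
    have "(h - g) * DD k a b h g = 0" using PP_diff[of k a b h g] hyp Pg by simp
    moreover obtain v where "DD k a b h g * v = 1" using unit0 DD0[OF hyp(1) g0 bez] by blast
    ultimately have "(h - g) * (DD k a b h g * v) = 0"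
      by (metis mult.assoc mult_zero_left)
    then show ?thesis using \<open>DD k a b h g * v = 1\<close> by simp
  qed
  have comax: "comaximal (fps_const (a i) + fps_const (b i) * h)
                          (fps_const (a j) + fps_const (b j) * h)"
    if hyp: "h $ 0 = 0" "i < k" "j < k" "i \<noteq> j" for h i j
  proof -
    obtain u v where uv: "u * a i + v * a j = 1" using cop[OF hyp(2-4)] by (auto simp: comaximal_def)
    define W where "W = fps_const u * (fps_const (a i) + fps_const (b i) * h)
         + fps_const v * (fps_const (a j) + fps_const (b j) * h)"
    have "W $ 0 = 1" using uv hyp(1) by (simp add: W_def)
    then obtain w where w: "W * w = 1" using unit0 by blast
    have "fps_const u * w * (fps_const (a i) + fps_const (b i) * h)
       + fps_const v * w * (fps_const (a j) + fps_const (b j) * h) = W * w"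
      unfolding W_def by (simp only: distrib_right distrib_left mult_ac)
    then show ?thesis unfolding comaximal_def using w by (intro exI[of _ "fps_const u * w"] exI[of _ "fps_const v * w"]) simp
  qed
  show ?thesis
  proof (intro conjI)
    show "\<exists>!g. g $ 0 = 0 \<and> f = (\<Prod>i<k. fps_const (a i) + fps_const (b i) * g)"
    proof (rule ex1I[of _ g])
      show "g $ 0 = 0 \<and> f = (\<Prod>i<k. fps_const (a i) + fps_const (b i) * g)"
        using g0 Pg by (simp add: PP_def)
      fix h assume "h $ 0 = 0 \<and> f = (\<Prod>i<k. fps_const (a i) + fps_const (b i) * h)"
      then show "h = g" using uniq by (simp add: PP_def)
    qed
    show "\<forall>g. g $ 0 = 0 \<and> f = (\<Prod>i<k. fps_const (a i) + fps_const (b i) * g) \<longrightarrow>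
             (\<forall>i<k. \<forall>j<k. i \<noteq> j \<longrightarrow>
                comaximal (fps_const (a i) + fps_const (b i) * g)
                          (fps_const (a j) + fps_const (b j) * g))"
      using comax by blast
    show "(\<forall>i<k. a i \<noteq> 0 \<and> \<not> a i dvd 1) \<longrightarrow>
             (\<exists>h :: nat \<Rightarrow> 'a fps. f = (\<Prod>i<k. h i)
                \<and> (\<forall>i<k. h i \<noteq> 0 \<and> \<not> h i dvd 1)
                \<and> (\<forall>i<k. \<forall>j<k. i \<noteq> j \<longrightarrow> comaximal (h i) (h j)))"
    proof
      assume A: "\<forall>i<k. a i \<noteq> 0 \<and> \<not> a i dvd 1"
      define h where "h i = fps_const (a i) + fps_const (b i) * g" for i
      have h0: "h i $ 0 = a i" for i using g0 by (simp add: h_def)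
      have "\<forall>i<k. h i \<noteq> 0 \<and> \<not> h i dvd 1"
      proof (intro allI impI conjI)
        fix i assume "i < k"
        then show "h i \<noteq> 0" using A h0[of i] by auto
        show "\<not> h i dvd 1"
        proof
          assume "h i dvd 1"
          then obtain q where "1 = h i * q" by (elim dvdE)
          then have "1 = a i * q $ 0" using h0[of i] by (metis fps_mult_nth_0 fps_one_nth)
          then show False using A \<open>i < k\<close> by (metis dvdI)
        qed
      qed
      moreover have "f = (\<Prod>i<k. h i)" using Pg by (simp add: PP_def h_def)
      ultimately show "\<exists>h :: nat \<Rightarrow> 'a fps. f = (\<Prod>i<k. h i)
                \<and> (\<forall>i<k. h i \<noteq> 0 \<and> \<not> h i dvd 1)
                \<and> (\<forall>i<k. \<forall>j<k. i \<noteq> j \<longrightarrow> comaximal (h i) (h j))"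
        using comax[OF g0] unfolding h_def by blast
    qed
  qed
qed

end
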